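(* Let $(\mathcal{A},\theta^* )$ be any instance satisfying the standing assumptions, with available action set $\mathcal{A}_t=\mathcal{A}$ in every round, let $C>0$ be a constant and $\beta\in[\tfrac14,\tfrac12]$. Assume the exploitation subroutine $f$ is a combinatorial linear semi-bandit policy (e.g. CombLinUCB) whose regret accumulated over the rounds in which it is invoked is $\tilde{\mathcal{O}}(kd\sqrt{T})$. Then InfluenceCB with parameters $\beta$ and threshold constant $C_t=C$ satisfies $$\mathrm{Regret}_T(\mathrm{InfluenceCB},\mathcal{A},\theta^* )\in\tilde{\mathcal{O}}(T^{2\beta}),\qquad \mathrm{RMSE}_T(\mathrm{InfluenceCB},\mathcal{A},\theta^* )\in\tilde{\mathcal{O}}(T^{-\beta}),$$ where $\tilde{\mathcal{O}}$ hides constants (depending on $M,k,d,C,c,c',\lambda$) and logarithmic factors.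
   Context: Setting: fixed action set $\mathcal{A}=\{X_1,\dots,X_M\}\subseteq\mathbb{R}^d$ spanning $\mathbb{R}^d$, $\|X\|_2\le c$, unknown $\theta^*$ with $\|\theta^*\|_2\le c'$ and $X^\top\theta^*\in[0,1]$; in each round $t=1,\dots,T$ the agent selects $k$ distinct actions $X_{t,1},\dots,X_{t,k}\in\mathcal{A}$ and observes independent binary rewards with $\mathbb{E}[r_{t,i}]=X_{t,i}^\top\theta^*$. For $\lambda>0$, $V_t=\lambda I+\sum_{s=1}^t\sum_{r=1}^kX_{s,r}X_{s,r}^\top$ ($V_0=\lambda I$) and $\hat\theta_t=V_t^{-1}\sum_{s\le t}\sum_{r=1}^k r_{s,r}X_{s,r}$ (ridge estimator). Algorithm InfluenceCB: at round $t$, compute $U_t(X)=\sqrt{X^\top V_{t-1}^{-1}X}$ for all $X\in\mathcal{A}$ and $u_t=\max_{X\in\mathcal{A}}U_t(X)$. If $u_t>C/t^\beta$ (exploration round), select the $k$ actions with the largest $U_t(X)$; otherwise (exploitation round) select the $k$ actions prescribed by the subroutine $f$ given the history. Then observe rewards and update $V_t,\hat\theta_t$. Regret: $\mathrm{Regret}_T=\mathbb{E}\big[\sum_{t=1}^T(\sum_{X\in\mathcal{E}^*}X^\top\theta^*-\sum_{i=1}^kX_{t,i}^\top\theta^* )\big]$ where $\mathcal{E}^*$ is a set of $k$ actions with largest $X^\top\theta^*$. RMSE: $\mathrm{RMSE}_T=\mathbb{E}\Big[\sqrt{\tfrac1M\sum_{X\in\mathcal{A}}(X^\top(\hat\theta_T-\theta^*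 ))^2}\Big]$. *)

theory Defs
  imports "HOL-Analysis.Analysis" "HOL-Probability.Probability" "HOL-Library.Landau_Symbols"
begin

(* A round record: the set S_t of k selected actions and the observed binary rewards
   (the reward function is only meaningful on S_t; it is False outside S_t). *)
type_synonym 'd round = "(real^'d) set \<times> ((real^'d) \<Rightarrow> bool)"
type_synonym 'd hist = "'d round list"

definition outer :: "real^'d \<Rightarrow> real^'d^'d" where
  "outer x = (\<chi> i j. x $ i * x $ j)"

definition Vmat :: "real \<Rightarrow> 'd hist \<Rightarrow> real^'d^'d" where
  "Vmat lam h = mat lam + (\<Sum>i<length h. \<Sum>x\<in>fst (h ! i). outer x)"

definition theta_hat :: "real \<Rightarrow> 'd hist \<Rightarrow> real^'d" where
  "theta_hat lam h = matrix_inv (Vmat lam h) *v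
      (\<Sum>i<length h. \<Sum>x\<in>fst (h ! i). of_bool (snd (h ! i) x) *\<^sub>R x)"

(* U_t(X) = sqrt (X^T V_{t-1}^{-1} X), where h is the history of the first t-1 rounds *)
definition Ucb :: "real \<Rightarrow> 'd hist \<Rightarrow> real^'d \<Rightarrow> real" where
  "Ucb lam h x = sqrt (x \<bullet> (matrix_inv (Vmat lam h) *v x))"

(* round t = length h + 1 is an exploration round iff u_t > C / t^beta *)
definition explore :: "(real^'d) set \<Rightarrow> real \<Rightarrow> real \<Rightarrow> real \<Rightarrow> 'd hist \<Rightarrow> bool" where
  "explore A lam C beta h \<longleftrightarrow>
     Max (Ucb lam h ` A) > C / (real (length h + 1) powr beta)"

definition top_k :: "(real^'d) set \<Rightarrow> nat \<Rightarrow> (real^'d \<Rightarrow> real) \<Rightarrow> (real^'d) set \<Rightarrow> bool" where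
  "top_k A k U S \<longleftrightarrow> S \<subseteq> A \<and> card S = k \<and> (\<forall>x\<in>S. \<forall>y\<in>A - S. U y \<le> U x)"

(* pol is (a deterministic instance of) InfluenceCB with exploitation subroutine f,
   threshold constant C and exponent beta; tie-breaking in exploration is arbitrary *)
definition influenceCB :: "(real^'d) set \<Rightarrow> nat \<Rightarrow> real \<Rightarrow> real \<Rightarrow> real \<Rightarrow>
     ('d hist \<Rightarrow> (real^'d) set) \<Rightarrow> ('d hist \<Rightarrow> (real^'d) set) \<Rightarrow> bool" where
  "influenceCB A k lam C beta f pol \<longleftrightarrow>
     (\<forall>h. (explore A lam C beta h \<longrightarrow> top_k A k (Ucb lam h) (pol h)) \<and>
          (\<not> explore A lam C beta h \<longrightarrow> pol h = f h))"

fun hist_pmf :: "(real^'d) \<Rightarrow> ('d hist \<Rightarrow> (real^'d) set) \<Rightarrow> nat \<Rightarrow> 'd hist pmf" where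
  "hist_pmf th pol 0 = return_pmf []"
| "hist_pmf th pol (Suc t) =
     do { h \<leftarrow> hist_pmf th pol t;
          r \<leftarrow> Pi_pmf (pol h) False (\<lambda>x. bernoulli_pmf (x \<bullet> th));
          return_pmf (h @ [(pol h, r)]) }"

definition opt_val :: "(real^'d) set \<Rightarrow> nat \<Rightarrow> real^'d \<Rightarrow> real" where
  "opt_val A k th = Max {(\<Sum>x\<in>S. x \<bullet> th) | S. S \<subseteq> A \<and> card S = k}"

definition gap :: "(real^'d) set \<Rightarrow> nat \<Rightarrow> real^'d \<Rightarrow> (real^'d) set \<Rightarrow> real" where
  "gap A k th S = opt_val A k th - (\<Sum>x\<in>S. x \<bullet> th)"

definition regret :: "(real^'d) set \<Rightarrow> nat \<Rightarrow> real^'d \<Rightarrow> ('d hist \<Rightarrow> (real^'d) set) \<Rightarrow> nat \<Rightarrow> real" where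
  "regret A k th pol T =
     measure_pmf.expectation (hist_pmf th pol T)
       (\<lambda>h. \<Sum>i<length h. gap A k th (fst (h ! i)))"

definition exploit_regret :: "(real^'d) set \<Rightarrow> nat \<Rightarrow> real \<Rightarrow> real \<Rightarrow> real \<Rightarrow> real^'d \<Rightarrow>
     ('d hist \<Rightarrow> (real^'d) set) \<Rightarrow> nat \<Rightarrow> real" where
  "exploit_regret A k lam C beta th pol T =
     measure_pmf.expectation (hist_pmf th pol T)
       (\<lambda>h. \<Sum>i<length h. if explore A lam C beta (take i h) then 0 else gap A k th (fst (h ! i)))"

definition rmse :: "(real^'d) set \<Rightarrow> real \<Rightarrow> real^'d \<Rightarrow> ('d hist \<Rightarrow> (real^'d) set) \<Rightarrow> nat \<Rightarrow> real" where
  "rmse A lam th pol T =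
     measure_pmf.expectation (hist_pmf th pol T)
       (\<lambda>h. sqrt ((1 / real (card A)) * (\<Sum>x\<in>A. (x \<bullet> (theta_hat lam h - th))\<^sup>2)))"

definition softO :: "(nat \<Rightarrow> real) \<Rightarrow> (nat \<Rightarrow> real) set" where
  "softO g = {F. \<exists>p::nat. F \<in> O(\<lambda>T. g T * (ln (real T)) ^ p)}"

end

theory Submission
  imports Defs
begin


definition Bf :: "real \<Rightarrow> 'd hist \<Rightarrow> real^'d \<Rightarrow> real^'d \<Rightarrow> real" where
  "Bf lam h u w = lam * (u \<bullet> w) + (\<Sum>i<length h. \<Sum>x\<in>fst (h!i). (x \<bullet> u) * (x \<bullet> w))"

definition Qf :: "real \<Rightarrow> 'd hist \<Rightarrow> real^'d \<Rightarrow> real" where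
  "Qf lam h y = y \<bullet> (matrix_inv (Vmat lam h) *v y)"

lemma mv_sum: "(sum f S) *v (z::'a::comm_semiring_1^'n) = (\<Sum>i\<in>S. f i *v z)"
proof (cases "finite S")
  case True then show ?thesis
    by (induction S rule: finite_induct) (auto simp: matrix_vector_mult_add_rdistrib)
qed simp

lemma outer_mv: "outer x *v z = (x \<bullet> z) *\<^sub>R x"
  by (simp add: outer_def matrix_vector_mult_def inner_vec_def vec_eq_iff sum_distrib_left
      mult.commute mult.left_commute)

lemma mat_mv: "mat (lam::real) *v z = lam *\<^sub>R z"
proof -
  have "\<And>i. (\<Sum>j\<in>UNIV. (if i = j then lam else 0) * z $ j) = lam * z $ i"
    by (simp add: if_distrib[where f="\<lambda>a. a * _"] cong: if_cong)
  then show ?thesis unfolding vec_eq_iff matrix_vector_mult_def mat_def by simp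
qed

lemma Vmat_mv: "Vmat lam h *v z = lam *\<^sub>R z + (\<Sum>i<length h. \<Sum>x\<in>fst (h!i). (x \<bullet> z) *\<^sub>R x)"
  by (simp add: Vmat_def matrix_vector_mult_add_rdistrib mv_sum outer_mv mat_mv)

lemma Vmat_inner: "(Vmat lam h *v u) \<bullet> w = Bf lam h u w"
  by (simp add: Vmat_mv Bf_def inner_add_left inner_sum_left mult.commute)

lemma Bf_sym: "Bf lam h u w = Bf lam h w u"
  by (simp add: Bf_def inner_commute mult.commute)

lemma Bf_ge: "lam \<ge> 0 \<Longrightarrow> Bf lam h u u \<ge> lam * (u \<bullet> u)"
  unfolding Bf_def by (auto intro!: sum_nonneg)

lemma Bf_nonneg: "lam \<ge> 0 \<Longrightarrow> Bf lam h u u \<ge> 0"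
  unfolding Bf_def by (auto intro!: sum_nonneg add_nonneg_nonneg)

lemma Bf_diff: "Bf lam h (a - b) (a - b) = Bf lam h a a - 2 * Bf lam h a b + Bf lam h b b"
  by (simp add: Bf_def algebra_simps inner_diff_left inner_diff_right sum.distrib sum_subtractf
      sum_distrib_left inner_commute power2_eq_square)

lemma Vmat_inv:
  assumes lam: "lam > 0"
  shows "Vmat lam h ** matrix_inv (Vmat lam h) = mat 1 \<and> matrix_inv (Vmat lam h) ** Vmat lam h = mat 1"
proof -
  have "inj ((*v) (Vmat lam h))"
  proof (rule injI)
    fix a b assume "Vmat lam h *v a = Vmat lam h *v b"
    then have "Vmat lam h *v (a - b) = 0" by (simp add: matrix_vector_mult_diff_distrib)
    then have "Bf lam h (a - b) (a - b) = 0" by (metis Vmat_inner inner_zero_left)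
    with Bf_ge[where h=h and u="a - b" and lam=lam] lam have "lam * ((a - b) \<bullet> (a - b)) \<le> 0"
      by simp
    with lam have "(a - b) \<bullet> (a - b) \<le> 0" by (simp add: mult_le_0_iff)
    then show "a = b" by (metis antisym inner_ge_zero inner_eq_zero_iff eq_iff_diff_eq_0)
  qed
  then have "invertible (Vmat lam h)"
    using matrix_left_invertible_injective invertible_left_inverse by blast
  then show ?thesis unfolding matrix_inv_def invertible_def by (rule someI_ex)
qed

lemma Vmat_inv_mv:
  assumes "lam > 0"
  shows "Vmat lam h *v (matrix_inv (Vmat lam h) *v y) = y"
    and "matrix_inv (Vmat lam h) *v (Vmat lam h *v y) = y"
  using Vmat_inv[OF assms, of h] by (auto simp: matrix_vector_mul_assoc)

lemma Qf_Bf: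
  fixes h :: "'d::finite hist"
  assumes "lam > 0"
  shows "Qf lam h y = Bf lam h (matrix_inv (Vmat lam h) *v y) (matrix_inv (Vmat lam h) *v y)"
    and "y \<bullet> w = Bf lam h (matrix_inv (Vmat lam h) *v y) w"
proof -
  define z where "z = matrix_inv (Vmat lam h) *v y"
  have y: "y = Vmat lam h *v z" using Vmat_inv_mv(1)[OF assms(1), of h y] z_def by simp
  have yw: "y \<bullet> u = Bf lam h z u" for u by (subst y) (simp add: Vmat_inner)
  show "y \<bullet> w = Bf lam h (matrix_inv (Vmat lam h) *v y) w" using yw z_def by simp
  show "Qf lam h y = Bf lam h (matrix_inv (Vmat lam h) *v y) (matrix_inv (Vmat lam h) *v y)"
    unfolding Qf_def using yw[of z] z_def by simp
qed

lemma Qf_nonneg: "lam > 0 \<Longrightarrow> Qf lam h y \<ge> 0"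
  using Qf_Bf(1)[where lam=lam and h=h and y=y] Bf_nonneg[OF less_imp_le] by simp

lemma Qf_var:
  assumes "lam > 0"
  shows "2 * (y \<bullet> w) - Bf lam h w w \<le> Qf lam h y"
proof -
  define z where "z = matrix_inv (Vmat lam h) *v y"
  have 1: "Bf lam h (w - z) (w - z) \<ge> 0"
    by (rule Bf_nonneg[OF less_imp_le[OF assms]])
  have 2: "Qf lam h y = Bf lam h z z" unfolding z_def by (rule Qf_Bf(1)[OF assms])
  have 3: "y \<bullet> w = Bf lam h z w" unfolding z_def by (rule Qf_Bf(2)[OF assms])
  have 4: "Bf lam h (w - z) (w - z) = Bf lam h w w - 2 * Bf lam h w z + Bf lam h z z"
    by (rule Bf_diff)
  have 5: "Bf lam h w z = Bf lam h z w" by (rule Bf_sym)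
  show ?thesis unfolding 2 3 using 1 4 5 by linarith
qed

lemma Qf_eq:
  assumes "lam > 0"
  shows "Qf lam h y = 2 * (y \<bullet> (matrix_inv (Vmat lam h) *v y)) - Bf lam h (matrix_inv (Vmat lam h) *v y) (matrix_inv (Vmat lam h) *v y)"
  using Qf_Bf[OF assms, where h=h and y=y] by simp

lemma Qf_scale:
  "Qf lam h (a *\<^sub>R y) = a^2 * Qf lam h y"
  by (simp add: Qf_def matrix_vector_mult_scaleR power2_eq_square)

lemma Qf_add:
  assumes "lam > 0"
  shows "Qf lam h (a + b) = Qf lam h a + 2 * (b \<bullet> (matrix_inv (Vmat lam h) *v a)) + Qf lam h b"
proof -
  define W where "W = matrix_inv (Vmat lam h)"
  have "a \<bullet> (W *v b) = b \<bullet> (W *v a)"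
    using Qf_Bf(2)[OF assms, where h=h and y=a and w="W *v b"] Qf_Bf(2)[OF assms, where h=h and y=b and w="W *v a"]
    unfolding W_def by (simp add: Bf_sym)
  note sym = this
  have "Qf lam h (a + b) = (a + b) \<bullet> (W *v a + W *v b)"
    unfolding Qf_def W_def by (simp only: matrix_vector_right_distrib)
  also have "\<dots> = a \<bullet> (W *v a) + a \<bullet> (W *v b) + b \<bullet> (W *v a) + b \<bullet> (W *v b)"
    by (simp only: inner_add_left inner_add_right add.assoc)
  also have "\<dots> = Qf lam h a + 2 * (b \<bullet> (W *v a)) + Qf lam h b"
    unfolding Qf_def W_def[symmetric] sym by simp
  finally show ?thesis unfolding W_def .
qed

lemma Qf_CS:
  assumes lam: "lam > 0"
  shows "(x \<bullet> (matrix_inv (Vmat lam h) *v w))^2 \<le> Qf lam h x * Qf lam h w"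
proof -
  define W where "W = matrix_inv (Vmat lam h)"
  define b where "b = x \<bullet> (W *v w)"
  have b_eq: "b = w \<bullet> (W *v x)"
    using Qf_Bf(2)[OF assms, where h=h and y=x and w="W *v w"] Qf_Bf(2)[OF assms, where h=h and y=w and w="W *v x"]
    unfolding W_def b_def by (simp add: Bf_sym)
  have key: "0 \<le> Qf lam h x + 2 * t * b + t^2 * Qf lam h w" for t
  proof -
    have "0 \<le> Qf lam h (x + t *\<^sub>R w)" by (rule Qf_nonneg[OF lam])
    also have "\<dots> = Qf lam h x + 2 * t * b + t^2 * Qf lam h w"
      unfolding Qf_add[OF lam] Qf_scale using b_eq
      by (simp add: W_def matrix_vector_mult_scaleR)
    finally show ?thesis .
  qed
  show ?thesis
  proof (cases "Qf lam h w = 0")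
    case True
    have "b = 0"
    proof (rule ccontr)
      assume "b \<noteq> 0"
      have "0 \<le> Qf lam h x + 2 * (- (Qf lam h x + 1) / (2 * b)) * b"
        using key[of "- (Qf lam h x + 1) / (2 * b)"] True by simp
      also have "\<dots> = -1" using \<open>b \<noteq> 0\<close> by (simp add: field_simps)
      finally show False by simp
    qed
    then show ?thesis using True by (simp add: b_def W_def)
  next
    case False
    then have q: "Qf lam h w > 0" using Qf_nonneg[OF lam, where h=h and y=w] by simp
    have "0 \<le> Qf lam h x + 2 * (- b / Qf lam h w) * b + (- b / Qf lam h w)^2 * Qf lam h w"
      by (rule key)
    also have "\<dots> = Qf lam h x - b^2 / Qf lam h w"
      using q by (simp add: field_simps power2_eq_square)
    finally have "b^2 \<le> Qf lam h x * Qf lam h w" using q by (simp add: field_simps)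
    then show ?thesis by (simp add: b_def W_def)
  qed
qed



lemma Qf_mono:
  assumes lam: "lam > 0" and le: "\<And>z. Bf lam h z z \<le> Bf lam h' z z"
  shows "Qf lam h' y \<le> Qf lam h y"
proof -
  define z where "z = matrix_inv (Vmat lam h') *v y"
  have "Qf lam h' y = 2 * (y \<bullet> z) - Bf lam h' z z"
    unfolding z_def by (rule Qf_eq[OF lam])
  also have "\<dots> \<le> 2 * (y \<bullet> z) - Bf lam h z z" using le[of z] by simp
  also have "\<dots> \<le> Qf lam h y" by (rule Qf_var[OF lam])
  finally show ?thesis .
qed

lemma Qf_count:
  assumes lam: "lam > 0" and n: "n > 0" and le: "\<And>z. n * (x \<bullet> z)^2 \<le> Bf lam h z z"
  shows "Qf lam h x \<le> 1 / n"
proof -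
  define z where "z = matrix_inv (Vmat lam h) *v x"
  define a where "a = x \<bullet> z"
  have "Qf lam h x = 2 * a - Bf lam h z z"
    unfolding z_def a_def by (rule Qf_eq[OF lam])
  also have "\<dots> \<le> 2 * a - n * a^2" using le[of z] a_def by simp
  also have "\<dots> \<le> 1 / n"
  proof -
    have "0 \<le> (n * a - 1)^2" by simp
    then have "2 * a * n - n * a^2 * n \<le> 1" by (simp add: power2_eq_square algebra_simps)
    then show ?thesis using n by (simp add: field_simps)
  qed
  finally show ?thesis .
qed

lemma Qf_lam:
  assumes lam: "lam > 0"
  shows "Qf lam h (lam *\<^sub>R t) \<le> lam * (t \<bullet> t)"
proof -
  define z where "z = matrix_inv (Vmat lam h) *v (lam *\<^sub>R t)"
  have "Qf lam h (lam *\<^sub>R t) = 2 * ((lam *\<^sub>R t) \<bullet> z) - Bf lam h z z"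
    unfolding z_def by (rule Qf_eq[OF lam])
  also have "\<dots> \<le> 2 * lam * (t \<bullet> z) - lam * (z \<bullet> z)"
    using Bf_ge[where h=h and u=z and lam=lam] lam by simp
  also have "\<dots> \<le> lam * (t \<bullet> t)"
  proof -
    have "0 \<le> (t - z) \<bullet> (t - z)" by simp
    then have "2 * (t \<bullet> z) - z \<bullet> z \<le> t \<bullet> t"
      by (simp add: inner_diff_left inner_diff_right inner_commute)
    then have "lam * (2 * (t \<bullet> z) - z \<bullet> z) \<le> lam * (t \<bullet> t)"
      using lam by (simp add: mult_left_mono)
    then show ?thesis by (simp add: algebra_simps)
  qed
  finally show ?thesis .
qed

lemma Qf_neg: "Qf lam h (- y) = Qf lam h y"
proof -
  have "Qf lam h ((-1) *\<^sub>R y) = (-1)^2 * Qf lam h y" by (rule Qf_scale)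
  then show ?thesis by simp
qed

lemma Qf_diff2:
  assumes lam: "lam > 0"
  shows "Qf lam h (a - b) \<le> 2 * Qf lam h a + 2 * Qf lam h b"
proof -
  have 1: "Qf lam h (a + b) = Qf lam h a + 2 * (b \<bullet> (matrix_inv (Vmat lam h) *v a)) + Qf lam h b"
    by (rule Qf_add[OF lam])
  have 2: "Qf lam h (a + - b) = Qf lam h a + 2 * ((- b) \<bullet> (matrix_inv (Vmat lam h) *v a)) + Qf lam h (- b)"
    by (rule Qf_add[OF lam])
  have 3: "Qf lam h (a + b) \<ge> 0" by (rule Qf_nonneg[OF lam])
  show ?thesis using 1 2 3 by (simp add: Qf_neg)
qed

lemma Qf_sum:
  assumes lam: "lam > 0" and fin: "finite S"
  shows "Qf lam h (\<Sum>x\<in>S. a x) \<le> card S * (\<Sum>x\<in>S. Qf lam h (a x))"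
proof (cases "S = {}")
  case True then show ?thesis by (simp add: Qf_def)
next
  case False
  define n where "n = real (card S)"
  have n: "n > 0" using False fin by (simp add: n_def card_gt_0_iff)
  define z where "z = matrix_inv (Vmat lam h) *v (\<Sum>x\<in>S. a x)"
  have "Qf lam h (\<Sum>x\<in>S. a x) = 2 * ((\<Sum>x\<in>S. a x) \<bullet> z) - Bf lam h z z"
    unfolding z_def by (rule Qf_eq[OF lam])
  also have "\<dots> = (\<Sum>x\<in>S. (2 * ((n *\<^sub>R a x) \<bullet> z) - Bf lam h z z) / n)"
    using n by (simp add: inner_sum_left sum_subtractf sum_divide_distrib[symmetric]
        sum_distrib_left n_def field_simps)
  also have "\<dots> \<le> (\<Sum>x\<in>S. Qf lam h (n *\<^sub>R a x) / n)"
    by (intro sum_mono divide_right_mono Qf_var[OF lam]) (use n in simp)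
  also have "\<dots> = n * (\<Sum>x\<in>S. Qf lam h (a x))"
    using n by (simp add: Qf_scale sum_distrib_left power2_eq_square)
  finally show ?thesis by (simp add: n_def)
qed



definition cnt :: "'d hist \<Rightarrow> real^'d \<Rightarrow> nat \<Rightarrow> nat" where
  "cnt h x i = card {l. l < i \<and> x \<in> fst (h ! l)}"

lemma Bf_take:
  assumes "i \<le> length h"
  shows "Bf lam (take i h) u w = lam * (u \<bullet> w) + (\<Sum>l<i. \<Sum>x\<in>fst (h ! l). (x \<bullet> u) * (x \<bullet> w))"
  using assms by (simp add: Bf_def min_def)

lemma Bf_take_mono:
  assumes "i \<le> j" "j \<le> length h"
  shows "Bf lam (take i h) z z \<le> Bf lam (take j h) z z"
proof -
  have "(\<Sum>l<i. \<Sum>x\<in>fst (h ! l). (x \<bullet> z) * (x \<bullet> z)) \<le> (\<Sum>l<j. \<Sum>x\<in>fst (h ! l). (x \<bullet> z) * (x \<bullet> z))"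
    using assms by (intro sum_mono2) (auto intro!: sum_nonneg)
  then show ?thesis using assms by (simp add: Bf_take)
qed

lemma cnt_le: "cnt h x i \<le> i"
proof -
  have "{l. l < i \<and> x \<in> fst (h ! l)} \<subseteq> {..<i}" by auto
  then show ?thesis unfolding cnt_def by (metis card_lessThan card_mono finite_lessThan)
qed

lemma cnt_less:
  assumes "i < j" "x \<in> fst (h ! i)"
  shows "cnt h x i < cnt h x j"
proof -
  have "{l. l < i \<and> x \<in> fst (h ! l)} \<subset> {l. l < j \<and> x \<in> fst (h ! l)}"
    using assms by auto
  then show ?thesis unfolding cnt_def by (rule psubset_card_mono[rotated]) auto
qed

lemma cnt_mono:
  assumes "i \<le> j" shows "cnt h x i \<le> cnt h x j"
  unfolding cnt_def using assms by (intro card_mono) auto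

lemma cnt_less_Suc:
  assumes "i < j" "x \<in> fst (h ! j)"
  shows "cnt h x (Suc i) < cnt h x (Suc j)"
  using cnt_mono[of "Suc i" j h x] cnt_less[of j "Suc j" x h] assms by simp

lemma Bf_cnt:
  assumes "i \<le> length h" "lam \<ge> 0" and fin: "\<forall>l<length h. finite (fst (h ! l))"
  shows "real (cnt h x i) * (x \<bullet> z)^2 \<le> Bf lam (take i h) z z"
proof -
  have e: "{l. l < i \<and> x \<in> fst (h ! l)} = {l\<in>{..<i}. x \<in> fst (h ! l)}" by auto
  have "(\<Sum>l<i. if x \<in> fst (h ! l) then (x \<bullet> z)^2 else 0) = (\<Sum>l\<in>{l\<in>{..<i}. x \<in> fst (h ! l)}. (x \<bullet> z)^2)"
    by (rule sum.inter_filter[symmetric]) simp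
  moreover have "(\<Sum>l\<in>{l\<in>{..<i}. x \<in> fst (h ! l)}. (x \<bullet> z)^2) = real (cnt h x i) * (x \<bullet> z)^2"
    unfolding cnt_def e by (rule sum_constant)
  ultimately have "real (cnt h x i) * (x \<bullet> z)^2 = (\<Sum>l<i. if x \<in> fst (h ! l) then (x \<bullet> z)^2 else 0)"
    by linarith
  also have "\<dots> \<le> (\<Sum>l<i. \<Sum>y\<in>fst (h ! l). (y \<bullet> z) * (y \<bullet> z))"
  proof (intro sum_mono)
    fix l assume l: "l \<in> {..<i}"
    then have "finite (fst (h ! l))" using fin assms(1) by auto
    then show "(if x \<in> fst (h ! l) then (x \<bullet> z)^2 else 0) \<le> (\<Sum>y\<in>fst (h ! l). (y \<bullet> z) * (y \<bullet> z))"
      by (auto intro!: sum_nonneg member_le_sum[where f="\<lambda>y. (y \<bullet> z) * (y \<bullet> z)", simplified]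
          simp: power2_eq_square)
  qed
  also have "\<dots> \<le> Bf lam (take i h) z z"
    using assms by (simp add: Bf_take)
  finally show ?thesis .
qed

lemma Qf_cnt:
  assumes lam: "lam > 0" and "i \<le> length h" and fin: "\<forall>l<length h. finite (fst (h ! l))"
    and "cnt h x i > 0"
  shows "Qf lam (take i h) x \<le> 1 / cnt h x i"
  using assms by (intro Qf_count Bf_cnt) auto

lemma count_rounds:
  assumes lam: "lam > 0" and finA: "finite A" and sub: "\<forall>l<length h. fst (h ! l) \<subseteq> A"
    and tau: "tau > 0" and I: "I \<subseteq> {..<length h}"
    and y: "\<forall>i\<in>I. y i \<in> fst (h ! i) \<and> tau \<le> Qf lam (take i h) (y i)"
  shows "real (card I) \<le> card A * (1 / tau + 1)"
proof -
  have fin: "\<forall>l<length h. finite (fst (h ! l))" using sub finA finite_subset by blast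
  define N where "N = nat \<lfloor>1 / tau\<rfloor>"
  have N: "real N \<le> 1 / tau"
  proof -
    have "0 \<le> \<lfloor>1 / tau\<rfloor>" using tau by simp
    then have "real N = of_int \<lfloor>1 / tau\<rfloor>" unfolding N_def by simp
    then show ?thesis using of_int_floor_le[of "1 / tau"] by linarith
  qed
  have cI: "card {i\<in>I. y i = x} \<le> N + 1" for x
  proof -
    let ?J = "{i\<in>I. y i = x}"
    have inj: "inj_on (cnt h x) ?J"
    proof (rule inj_onI)
      fix i j assume i: "i \<in> ?J" and j: "j \<in> ?J" and eq: "cnt h x i = cnt h x j"
      show "i = j"
      proof (rule ccontr)
        assume "i \<noteq> j"
        then have "i < j \<or> j < i" by auto
        then show False using cnt_less[of i j x h] cnt_less[of j i x h] i j y eq by auto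
      qed
    qed
    have img: "cnt h x ` ?J \<subseteq> {..N}"
    proof
      fix m assume "m \<in> cnt h x ` ?J"
      then obtain i where i: "i \<in> ?J" and m: "m = cnt h x i" by auto
      show "m \<in> {..N}"
      proof (cases "m = 0")
        case False
        have il: "i \<le> length h" using i I by auto
        have "tau \<le> Qf lam (take i h) x" using i y by auto
        also have "\<dots> \<le> 1 / m" using Qf_cnt[OF lam il fin] False m by auto
        finally have "real m \<le> 1 / tau" using tau False by (simp add: field_simps)
        then show ?thesis unfolding N_def by (simp add: le_nat_floor)
      qed simp
    qed
    have "card ?J = card (cnt h x ` ?J)" using inj by (simp add: card_image)
    also have "\<dots> \<le> card {..N}" using img by (intro card_mono) auto
    finally show ?thesis by simp
  qed
  have yA: "\<forall>i\<in>I. y i \<in> A" using y I sub by (meson lessThan_iff subsetD)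
  have "I = (\<Union>x\<in>A. {i\<in>I. y i = x})" using yA by auto
  then have "card I \<le> (\<Sum>x\<in>A. card {i\<in>I. y i = x})"
    by (metis card_UN_le finA)
  also have "\<dots> \<le> (\<Sum>x\<in>A. N + 1)" by (intro sum_mono cI)
  finally have "card I \<le> card A * (N + 1)" by simp
  then have "real (card I) \<le> real (card A * (N + 1))" by (simp only: of_nat_le_iff)
  then have "real (card I) \<le> real (card A) * (real N + 1)" by (simp add: algebra_simps)
  also have "\<dots> \<le> card A * (1 / tau + 1)" using N by (intro mult_left_mono) auto
  finally show ?thesis .
qed

lemma pot_bound:
  assumes lam: "lam > 0" and finA: "finite A" and sub: "\<forall>l<length h. fst (h ! l) \<subseteq> A"
  shows "(\<Sum>i<length h. \<Sum>x\<in>fst (h ! i). Qf lam (take (Suc i) h) x) \<le> card A * harm (length h)"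
proof -
  have fin: "\<forall>l<length h. finite (fst (h ! l))" using sub finA finite_subset by blast
  let ?n = "length h"
  let ?f = "\<lambda>i x. Qf lam (take (Suc i) h) x"
  have "(\<Sum>i<?n. \<Sum>x\<in>fst (h ! i). ?f i x) = (\<Sum>i<?n. \<Sum>x\<in>A. if x \<in> fst (h ! i) then ?f i x else 0)"
  proof (rule sum.cong[OF refl])
    fix i assume "i \<in> {..<?n}"
    then have "fst (h ! i) \<subseteq> A" using sub by auto
    then show "(\<Sum>x\<in>fst (h ! i). ?f i x) = (\<Sum>x\<in>A. if x \<in> fst (h ! i) then ?f i x else 0)"
    proof -
      have e: "{x\<in>A. x \<in> fst (h ! i)} = fst (h ! i)" using \<open>fst (h ! i) \<subseteq> A\<close> by auto
      have "(\<Sum>x\<in>A. if x \<in> fst (h ! i) then ?f i x else 0) = (\<Sum>x\<in>{x\<in>A. x \<in> fst (h ! i)}. ?f i x)"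
        by (simp add: sum.inter_filter[OF finA])
      then show ?thesis using e by simp
    qed
  qed
  also have "\<dots> = (\<Sum>x\<in>A. \<Sum>i<?n. if x \<in> fst (h ! i) then ?f i x else 0)"
    by (rule sum.swap)
  also have "\<dots> = (\<Sum>x\<in>A. \<Sum>i\<in>{i\<in>{..<?n}. x \<in> fst (h ! i)}. ?f i x)"
    by (rule sum.cong[OF refl], rule sum.inter_filter[symmetric], simp)
  also have "\<dots> \<le> (\<Sum>x\<in>A. harm ?n)"
  proof (intro sum_mono)
    fix x assume "x \<in> A"
    let ?J = "{i\<in>{..<?n}. x \<in> fst (h ! i)}"
    let ?g = "\<lambda>i. cnt h x (Suc i)"
    have pos: "?g i > 0" if "i \<in> ?J" for i
      using cnt_less[of i "Suc i" x h] that by auto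
    have "(\<Sum>i\<in>?J. ?f i x) \<le> (\<Sum>i\<in>?J. 1 / real (?g i))"
    proof (intro sum_mono)
      fix i assume i: "i \<in> ?J"
      then have "Suc i \<le> ?n" by auto
      then show "?f i x \<le> 1 / real (?g i)" using Qf_cnt[OF lam _ fin pos[OF i]] by simp
    qed
    also have "\<dots> = (\<Sum>m\<in>?g ` ?J. 1 / real m)"
    proof -
      have "inj_on ?g ?J"
      proof (rule inj_onI)
        fix i j assume i: "i \<in> ?J" and j: "j \<in> ?J" and eq: "?g i = ?g j"
        show "i = j"
        proof (rule ccontr)
          assume "i \<noteq> j"
          then have "i < j \<or> j < i" by auto
          then show False using cnt_less_Suc[of i j x h] cnt_less_Suc[of j i x h] i j eq
            by auto
        qed
      qed
      then show ?thesis by (simp add: sum.reindex)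
    qed
    also have "\<dots> \<le> (\<Sum>m\<in>{1..?n}. 1 / real m)"
    proof (intro sum_mono2)
      show "?g ` ?J \<subseteq> {1..?n}"
      proof
        fix m assume "m \<in> ?g ` ?J"
        then obtain i where i: "i \<in> ?J" "m = ?g i" by auto
        have "?g i \<le> Suc i" by (rule cnt_le)
        then show "m \<in> {1..?n}" using i pos[OF i(1)] by auto
      qed
    qed auto
    also have "\<dots> = harm ?n" by (simp add: harm_def divide_inverse)
    finally show "(\<Sum>i\<in>?J. ?f i x) \<le> harm ?n" .
  qed
  also have "\<dots> = card A * harm ?n" by simp
  finally show ?thesis .
qed



lemma integral_bind_pmf_fin:
  fixes f :: "'b \<Rightarrow> real"
  assumes finM: "finite (set_pmf M)" and finN: "\<And>x. x \<in> set_pmf M \<Longrightarrow> finite (set_pmf (N x))"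
  shows "measure_pmf.expectation (bind_pmf M N) f =
         measure_pmf.expectation M (\<lambda>x. measure_pmf.expectation (N x) f)"
proof -
  define S where "S = set_pmf (bind_pmf M N)"
  have finS: "finite S" unfolding S_def using finM finN by simp
  have sub: "set_pmf (N x) \<subseteq> S" if "x \<in> set_pmf M" for x using that unfolding S_def by auto
  have pb: "pmf (bind_pmf M N) y = (\<Sum>x\<in>set_pmf M. pmf (N x) y * pmf M x)" for y
    unfolding pmf_bind by (rule integral_measure_pmf_real[OF finM]) (simp add: set_pmf_eq)
  have "measure_pmf.expectation (bind_pmf M N) f = (\<Sum>y\<in>S. f y * pmf (bind_pmf M N) y)"
    by (rule integral_measure_pmf_real[OF finS]) (simp add: S_def)
  also have "\<dots> = (\<Sum>y\<in>S. \<Sum>x\<in>set_pmf M. f y * pmf (N x) y * pmf M x)"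
    by (simp add: pb sum_distrib_left mult.assoc)
  also have "\<dots> = (\<Sum>x\<in>set_pmf M. (\<Sum>y\<in>S. f y * pmf (N x) y) * pmf M x)"
    by (subst sum.swap) (simp add: sum_distrib_right)
  also have "\<dots> = (\<Sum>x\<in>set_pmf M. measure_pmf.expectation (N x) f * pmf M x)"
  proof (rule sum.cong[OF refl])
    fix x assume x: "x \<in> set_pmf M"
    have "measure_pmf.expectation (N x) f = (\<Sum>y\<in>S. f y * pmf (N x) y)"
      by (rule integral_measure_pmf_real[OF finS]) (use sub[OF x] in auto)
    then show "(\<Sum>y\<in>S. f y * pmf (N x) y) * pmf M x = measure_pmf.expectation (N x) f * pmf M x"
      by simp
  qed
  also have "\<dots> = measure_pmf.expectation M (\<lambda>x. measure_pmf.expectation (N x) f)"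
    by (rule integral_measure_pmf_real[OF finM, symmetric]) simp
  finally show ?thesis .
qed

lemma hist_pmf_Suc':
  "hist_pmf th pol (Suc t) = bind_pmf (hist_pmf th pol t)
     (\<lambda>h. map_pmf (\<lambda>r. h @ [(pol h, r)]) (Pi_pmf (pol h) False (\<lambda>x. bernoulli_pmf (x \<bullet> th))))"
  by (simp add: map_pmf_def)

lemma hist_support:
  "h \<in> set_pmf (hist_pmf th pol t) \<Longrightarrow> length h = t \<and> (\<forall>i<t. fst (h ! i) = pol (take i h))"
proof (induction t arbitrary: h)
  case 0 then show ?case by simp
next
  case (Suc t)
  from Suc.prems obtain h0 r where h0: "h0 \<in> set_pmf (hist_pmf th pol t)" and h: "h = h0 @ [(pol h0, r)]"
    by (auto simp: hist_pmf_Suc')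
  from Suc.IH[OF h0] have l: "length h0 = t" and g: "\<forall>i<t. fst (h0 ! i) = pol (take i h0)" by auto
  show ?case
  proof
    show "length h = Suc t" using h l by simp
    show "\<forall>i<Suc t. fst (h ! i) = pol (take i h)"
    proof (intro allI impI)
      fix i assume "i < Suc t"
      then consider "i < t" | "i = t" by linarith
      then show "fst (h ! i) = pol (take i h)"
      proof cases
        case 1 then show ?thesis using g h l by (simp add: nth_append)
      next
        case 2 then show ?thesis using h l by (simp add: nth_append)
      qed
    qed
  qed
qed

lemma finite_set_Pi_pmf_bool:
  assumes "finite S"
  shows "finite (set_pmf (Pi_pmf S (False::bool) p))"
proof -
  have "set_pmf (Pi_pmf S False p) \<subseteq> PiE_dflt S False (set_pmf \<circ> p)"
    by (rule set_Pi_pmf_subset'[OF assms])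
  moreover have "finite (PiE_dflt S False (set_pmf \<circ> p))"
    using assms by (intro finite_PiE_dflt) (auto intro: finite_subset[of _ UNIV])
  ultimately show ?thesis by (rule finite_subset)
qed

lemma hist_finite:
  assumes "\<forall>h. finite (pol h)"
  shows "finite (set_pmf (hist_pmf th pol t))"
proof (induction t)
  case 0 then show ?case by simp
next
  case (Suc t)
  then show ?case unfolding hist_pmf_Suc' using assms
    by (auto intro!: finite_set_Pi_pmf_bool)
qed

lemma exp_step:
  fixes F :: "'d::finite hist \<Rightarrow> real"
  assumes fin: "\<forall>h. finite (pol h)"
    and step: "\<And>h. h \<in> set_pmf (hist_pmf th pol t) \<Longrightarrow>
      measure_pmf.expectation (Pi_pmf (pol h) False (\<lambda>x. bernoulli_pmf (x \<bullet> th))) (\<lambda>r. F (h @ [(pol h, r)])) \<le> F h"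
  shows "measure_pmf.expectation (hist_pmf th pol (Suc t)) F \<le> measure_pmf.expectation (hist_pmf th pol t) F"
proof -
  have "measure_pmf.expectation (hist_pmf th pol (Suc t)) F =
        measure_pmf.expectation (hist_pmf th pol t)
          (\<lambda>h. measure_pmf.expectation (Pi_pmf (pol h) False (\<lambda>x. bernoulli_pmf (x \<bullet> th))) (\<lambda>r. F (h @ [(pol h, r)])))"
    unfolding hist_pmf_Suc'
    by (subst integral_bind_pmf_fin) (auto simp: hist_finite[OF fin] finite_set_Pi_pmf_bool fin)
  also have "\<dots> \<le> measure_pmf.expectation (hist_pmf th pol t) F"
    by (intro integral_mono_AE integrable_measure_pmf_finite hist_finite[OF fin] AE_pmfI step)
  finally show ?thesis .
qed

lemma exp_noise:
  assumes fin: "finite S" and mean: "\<forall>x\<in>S. 0 \<le> x \<bullet> th \<and> x \<bullet> th \<le> 1"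
  shows "measure_pmf.expectation (Pi_pmf S False (\<lambda>x. bernoulli_pmf (x \<bullet> th)))
           (\<lambda>r. \<Sum>x\<in>S. (of_bool (r x) - x \<bullet> th) * g x) = 0"
proof -
  let ?P = "Pi_pmf S False (\<lambda>x. bernoulli_pmf (x \<bullet> th))"
  have int: "integrable ?P F" for F :: "_ \<Rightarrow> real"
    by (rule integrable_measure_pmf_finite[OF finite_set_Pi_pmf_bool[OF fin]])
  have each: "measure_pmf.expectation ?P (\<lambda>r. (of_bool (r x) - x \<bullet> th) * g x) = 0" if x: "x \<in> S" for x
  proof -
    have "measure_pmf.expectation ?P (\<lambda>r. of_bool (r x) :: real) =
          measure_pmf.expectation (map_pmf (\<lambda>r. r x) ?P) (\<lambda>b. of_bool b)"
      by simp
    also have "\<dots> = measure_pmf.expectation (bernoulli_pmf (x \<bullet> th)) (\<lambda>b. of_bool b)"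
      using x fin by (simp add: Pi_pmf_component)
    also have "\<dots> = x \<bullet> th" using mean x by simp
    finally have e: "measure_pmf.expectation ?P (\<lambda>r. of_bool (r x) :: real) = x \<bullet> th" .
    have "measure_pmf.expectation ?P (\<lambda>r. (of_bool (r x) - x \<bullet> th) * g x) =
          (measure_pmf.expectation ?P (\<lambda>r. of_bool (r x)) - x \<bullet> th) * g x"
      by (simp add: int)
    then show ?thesis using e by simp
  qed
  have e: "measure_pmf.expectation ?P (\<lambda>r. of_bool (r x) :: real) = x \<bullet> th" if x: "x \<in> S" for x
  proof -
    have "measure_pmf.expectation ?P (\<lambda>r. of_bool (r x) :: real) =
          measure_pmf.expectation (map_pmf (\<lambda>r. r x) ?P) (\<lambda>b. of_bool b)"
      by simp
    also have "\<dots> = measure_pmf.expectation (bernoulli_pmf (x \<bullet> th)) (\<lambda>b. of_bool b)"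
      using x fin by (simp add: Pi_pmf_component)
    also have "\<dots> = x \<bullet> th" using mean x by simp
    finally show ?thesis .
  qed
  show ?thesis
    by (subst Bochner_Integration.integral_sum) (auto simp: int e)
qed



definition Sn :: "real^'d \<Rightarrow> 'd hist \<Rightarrow> real^'d" where
  "Sn th h = (\<Sum>i<length h. \<Sum>x\<in>fst (h ! i). (of_bool (snd (h ! i) x) - x \<bullet> th) *\<^sub>R x)"

definition Pot :: "real \<Rightarrow> 'd::finite hist \<Rightarrow> real" where
  "Pot lam h = (\<Sum>i<length h. \<Sum>x\<in>fst (h ! i). Qf lam (take (Suc i) h) x)"

definition Psi :: "real \<Rightarrow> real^'d \<Rightarrow> nat \<Rightarrow> 'd::finite hist \<Rightarrow> real" where
  "Psi lam th k h = Qf lam h (Sn th h) - real k * Pot lam h"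

lemma Vmat_fst:
  assumes "map fst h = map fst h'"
  shows "Vmat lam h = Vmat lam h'"
proof -
  have l: "length h = length h'" using assms by (metis length_map)
  have "fst (h ! i) = fst (h' ! i)" if "i < length h" for i
    using assms that l by (metis nth_map)
  then show ?thesis unfolding Vmat_def l by (intro arg_cong2[where f="(+)"] refl sum.cong) (auto simp: l)
qed

lemma Qf_fst:
  assumes "map fst h = map fst h'"
  shows "Qf lam h y = Qf lam h' y"
  unfolding Qf_def using Vmat_fst[OF assms] by simp

lemma Sn_snoc: "Sn th (h @ [(S, r)]) = Sn th h + (\<Sum>x\<in>S. (of_bool (r x) - x \<bullet> th) *\<^sub>R x)"
  unfolding Sn_def by (simp add: nth_append)

lemma Pot_snoc: "Pot lam (h @ [(S, r)]) = Pot lam h + (\<Sum>x\<in>S. Qf lam (h @ [(S, r)]) x)"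
  unfolding Pot_def by (simp add: nth_append)

lemma Bf_snoc: "Bf lam (h @ [(S, r)]) z z = Bf lam h z z + (\<Sum>x\<in>S. (x \<bullet> z) * (x \<bullet> z))"
  unfolding Bf_def by (simp add: nth_append)

lemma Psi_step:
  fixes h :: "'d::finite hist"
  assumes lam: "lam > 0" and fin: "finite S" and card: "card S = k"
    and mean: "\<forall>x\<in>S. 0 \<le> x \<bullet> th \<and> x \<bullet> th \<le> 1"
  shows "Psi lam th k (h @ [(S, r)]) \<le> Psi lam th k h +
     2 * (\<Sum>x\<in>S. (of_bool (r x) - x \<bullet> th) * (x \<bullet> (matrix_inv (Vmat lam (h @ [(S, \<lambda>_. False)])) *v Sn th h)))"
proof -
  let ?h' = "h @ [(S, r)]"
  define eta where "eta x = (of_bool (r x) - x \<bullet> th :: real)" for x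
  define D where "D = (\<Sum>x\<in>S. eta x *\<^sub>R x)"
  define w where "w = matrix_inv (Vmat lam (h @ [(S, \<lambda>_. False)])) *v Sn th h"
  have Vm: "Vmat lam ?h' = Vmat lam (h @ [(S, \<lambda>_. False)])" by (rule Vmat_fst) simp
  have eta1: "(eta x)^2 \<le> 1" if "x \<in> S" for x
  proof -
    have "-1 \<le> eta x" "eta x \<le> 1" using mean that unfolding eta_def by (auto simp: of_bool_def)
    then show ?thesis by (simp add: abs_square_le_1)
  qed
  have 1: "Qf lam ?h' (Sn th ?h') = Qf lam ?h' (Sn th h) + 2 * (D \<bullet> w) + Qf lam ?h' D"
    unfolding Sn_snoc Qf_add[OF lam] D_def[symmetric] eta_def[symmetric] w_def Vm[symmetric]
    by (simp add: eta_def D_def)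
  have 2: "Qf lam ?h' (Sn th h) \<le> Qf lam h (Sn th h)"
    by (rule Qf_mono[OF lam]) (auto simp: Bf_snoc intro!: sum_nonneg)
  have 3: "Qf lam ?h' D \<le> k * (\<Sum>x\<in>S. Qf lam ?h' x)"
  proof -
    have "Qf lam ?h' D \<le> card S * (\<Sum>x\<in>S. Qf lam ?h' (eta x *\<^sub>R x))"
      unfolding D_def by (rule Qf_sum[OF lam fin])
    also have "\<dots> = k * (\<Sum>x\<in>S. (eta x)^2 * Qf lam ?h' x)" by (simp add: Qf_scale card)
    also have "\<dots> \<le> k * (\<Sum>x\<in>S. Qf lam ?h' x)"
    proof (intro mult_left_mono sum_mono)
      fix x assume "x \<in> S"
      then show "(eta x)^2 * Qf lam ?h' x \<le> Qf lam ?h' x"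
        using eta1 Qf_nonneg[OF lam, where h="?h'" and y=x] by (simp add: mult_left_le_one_le)
    qed simp
    finally show ?thesis .
  qed
  have 4: "D \<bullet> w = (\<Sum>x\<in>S. eta x * (x \<bullet> w))"
    unfolding D_def by (simp add: inner_sum_left)
  show ?thesis
    unfolding Psi_def Pot_snoc 1 eta_def[symmetric] w_def[symmetric] 4[symmetric]
    using 2 3 by (simp add: algebra_simps)
qed

lemma Psi_exp:
  fixes pol :: "'d::finite hist \<Rightarrow> (real^'d) set"
  assumes lam: "lam > 0" and valid: "\<forall>h. finite (pol h) \<and> card (pol h) = k \<and> (\<forall>x\<in>pol h. 0 \<le> x \<bullet> th \<and> x \<bullet> th \<le> 1)"
  shows "measure_pmf.expectation (hist_pmf th pol T) (Psi lam th k) \<le> 0"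
proof (induction T)
  case 0
  have "Psi lam th k [] = 0" by (simp add: Psi_def Pot_def Sn_def Qf_def)
  then show ?case by simp
next
  case (Suc T)
  have fin: "\<forall>h. finite (pol h)" using valid by blast
  have "measure_pmf.expectation (hist_pmf th pol (Suc T)) (Psi lam th k) \<le>
        measure_pmf.expectation (hist_pmf th pol T) (Psi lam th k)"
  proof (rule exp_step[OF fin])
    fix h
    let ?P = "Pi_pmf (pol h) False (\<lambda>x. bernoulli_pmf (x \<bullet> th))"
    define w where "w = matrix_inv (Vmat lam (h @ [(pol h, \<lambda>_. False)])) *v Sn th h"
    have int: "integrable ?P F" for F :: "_ \<Rightarrow> real"
      by (rule integrable_measure_pmf_finite[OF finite_set_Pi_pmf_bool]) (use fin in blast)
    have "measure_pmf.expectation ?P (\<lambda>r. Psi lam th k (h @ [(pol h, r)])) \<le>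
          measure_pmf.expectation ?P (\<lambda>r. Psi lam th k h + 2 * (\<Sum>x\<in>pol h. (of_bool (r x) - x \<bullet> th) * (x \<bullet> w)))"
      by (intro integral_mono int) (unfold w_def, rule Psi_step[OF lam], use valid in auto)
    also have "\<dots> = Psi lam th k h + 2 * measure_pmf.expectation ?P (\<lambda>r. \<Sum>x\<in>pol h. (of_bool (r x) - x \<bullet> th) * (x \<bullet> w))"
      by (simp add: int)
    also have "\<dots> = Psi lam th k h"
      using exp_noise[of "pol h" th "\<lambda>x. x \<bullet> w"] valid by simp
    finally show "measure_pmf.expectation ?P (\<lambda>r. Psi lam th k (h @ [(pol h, r)])) \<le> Psi lam th k h" .
  qed
  then show ?case using Suc.IH by linarith
qed



lemma Ucb_Qf: "Ucb lam h x = sqrt (Qf lam h x)"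
  by (simp add: Ucb_def Qf_def)

lemma pol_valid:
  assumes alg: "influenceCB A k lam C beta f pol" and f_valid: "\<forall>h. f h \<subseteq> A \<and> card (f h) = k"
  shows "pol h \<subseteq> A \<and> card (pol h) = k"
  using alg f_valid unfolding influenceCB_def top_k_def by metis

lemma explore_pick:
  assumes alg: "influenceCB A k lam C beta f pol" and k: "1 \<le> k"
    and x: "x \<in> A" and ex: "explore A lam C beta h"
  shows "\<exists>y\<in>pol h. Ucb lam h x \<le> Ucb lam h y"
proof -
  have tk: "top_k A k (Ucb lam h) (pol h)" using alg ex unfolding influenceCB_def by blast
  show ?thesis
  proof (cases "x \<in> pol h")
    case True then show ?thesis by auto
  next
    case False
    have "pol h \<noteq> {}" using tk k unfolding top_k_def by auto
    then obtain y where "y \<in> pol h" by auto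
    then show ?thesis using tk False x unfolding top_k_def by auto
  qed
qed

lemma powr_sq: "(t::real) powr (2 * b) = t powr b * t powr b"
  by (simp add: powr_add[symmetric])

lemma explore_count:
  fixes h :: "'d::finite hist"
  assumes lam: "lam > 0" and C: "C > 0" and beta: "0 \<le> beta"
    and finA: "finite A" and Ane: "A \<noteq> {}" and k: "1 \<le> k"
    and alg: "influenceCB A k lam C beta f pol" and valid: "\<forall>h. pol h \<subseteq> A"
    and len: "length h = T" and gen: "\<forall>i<T. fst (h ! i) = pol (take i h)"
  shows "real (card {i. i < T \<and> explore A lam C beta (take i h)}) \<le> card A * (real T powr (2 * beta) / C^2 + 1)"
proof (cases "T = 0")
  case True then show ?thesis by simp
next
  case False
  let ?I = "{i. i < T \<and> explore A lam C beta (take i h)}"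
  define tau where "tau = C^2 / real T powr (2 * beta)"
  have Tpos: "real T > 0" using False by simp
  have Tb: "real T powr beta > 0" using Tpos by simp
  have tau: "tau > 0" unfolding tau_def using C Tpos by simp
  have sub: "\<forall>l<length h. fst (h ! l) \<subseteq> A" using gen valid len by auto
  have "\<forall>i\<in>?I. \<exists>y. y \<in> fst (h ! i) \<and> tau \<le> Qf lam (take i h) y"
  proof
    fix i assume i: "i \<in> ?I"
    then have iT: "i < T" and ex: "explore A lam C beta (take i h)" by auto
    have li: "length (take i h) = i" using iT len by simp
    have ne: "Ucb lam (take i h) ` A \<noteq> {}" using Ane by auto
    obtain m where m: "m \<in> A" "Ucb lam (take i h) m = Max (Ucb lam (take i h) ` A)"
      using Max_in[OF finite_imageI[OF finA] ne] by auto
    obtain y where y: "y \<in> pol (take i h)" "Ucb lam (take i h) m \<le> Ucb lam (take i h) y"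
      using explore_pick[OF alg k m(1) ex] by auto
    have "C / real T powr beta \<le> C / real (i + 1) powr beta"
      using iT C beta by (intro divide_left_mono powr_mono2 mult_pos_pos) auto
    also have "\<dots> < Ucb lam (take i h) y"
      using ex y m li unfolding explore_def by simp
    finally have lt: "C / real T powr beta < sqrt (Qf lam (take i h) y)" by (simp add: Ucb_Qf)
    have "tau = (C / real T powr beta)^2" unfolding tau_def powr_sq by (simp add: power2_eq_square)
    also have "\<dots> \<le> (sqrt (Qf lam (take i h) y))^2"
      using lt C Tb by (intro power_mono) auto
    also have "\<dots> = Qf lam (take i h) y" using Qf_nonneg[OF lam] by simp
    finally show "\<exists>y. y \<in> fst (h ! i) \<and> tau \<le> Qf lam (take i h) y"
      using y gen iT by auto
  qed
  then have "\<exists>y. \<forall>i\<in>?I. y i \<in> fst (h ! i) \<and> tau \<le> Qf lam (take i h) (y i)"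
    by (rule bchoice)
  then obtain y where y: "\<forall>i\<in>?I. y i \<in> fst (h ! i) \<and> tau \<le> Qf lam (take i h) (y i)"
    by blast
  have "real (card ?I) \<le> card A * (1 / tau + 1)"
    by (rule count_rounds[OF lam finA sub tau _ y]) (use len in auto)
  also have "1 / tau = real T powr (2 * beta) / C^2" unfolding tau_def by simp
  finally show ?thesis .
qed

lemma u_bound:
  fixes h :: "'d::finite hist"
  assumes lam: "lam > 0" and C: "C > 0" and beta: "0 \<le> beta" "beta \<le> 1/2"
    and finA: "finite A" and k: "1 \<le> k"
    and alg: "influenceCB A k lam C beta f pol" and valid: "\<forall>h. pol h \<subseteq> A"
    and len: "length h = T" and gen: "\<forall>i<T. fst (h ! i) = pol (take i h)"
    and T: "real T \<ge> 4 * card A" "T \<ge> 1" and x: "x \<in> A"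
  shows "Qf lam h x \<le> (2 * C^2 + 4 * card A) / real T powr (2 * beta)"
proof (rule ccontr)
  define M where "M = real (card A)"
  define q where "q = Qf lam h x"
  assume "\<not> ?thesis"
  then have qbig: "q > (2 * C^2 + 4 * M) / real T powr (2 * beta)" unfolding q_def M_def by simp
  have Tpos: "real T > 0" using T by simp
  have TB: "real T powr (2 * beta) > 0" using Tpos by simp
  have TBle: "real T powr (2 * beta) \<le> real T"
    using powr_mono[of "2 * beta" 1 "real T"] beta T by simp
  have M0: "M \<ge> 0" unfolding M_def by simp
  have "2 * C^2 / real T powr (2 * beta) \<le> (2 * C^2 + 4 * M) / real T powr (2 * beta)"
    using M0 TB by (intro divide_right_mono) auto
  then have q1: "q > 2 * C^2 / real T powr (2 * beta)" using qbig by linarith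
  have q2: "q > 4 * M / real T"
  proof -
    have "4 * M / real T \<le> 4 * M / real T powr (2 * beta)"
      using TBle TB M0 by (intro divide_left_mono) auto
    also have "\<dots> \<le> (2 * C^2 + 4 * M) / real T powr (2 * beta)"
      using TB by (intro divide_right_mono) auto
    finally show ?thesis using qbig by linarith
  qed
  have "2 * C^2 / real T powr (2 * beta) > 0" using C TB by (intro divide_pos_pos) auto
  then have qpos: "q > 0" using q1 by linarith
  let ?I = "{T div 2..<T}"
  have sub: "\<forall>l<length h. fst (h ! l) \<subseteq> A" using gen valid len by auto
  have "\<forall>i\<in>?I. \<exists>y. y \<in> fst (h ! i) \<and> q \<le> Qf lam (take i h) y"
  proof
    fix i assume i: "i \<in> ?I"
    then have iT: "i < T" and i2: "T \<le> 2 * (i + 1)" by auto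
    have li: "length (take i h) = i" using iT len by simp
    have qx: "q \<le> Qf lam (take i h) x"
      unfolding q_def
    proof -
      have "Qf lam (take T h) x \<le> Qf lam (take i h) x"
        using iT len by (intro Qf_mono[OF lam] Bf_take_mono) auto
      then show "Qf lam h x \<le> Qf lam (take i h) x" using len by simp
    qed
    have ib: "real (i + 1) powr (2 * beta) > 0" by simp
    have "real T powr (2 * beta) \<le> (2 * real (i + 1)) powr (2 * beta)"
      using i2 beta by (intro powr_mono2) auto
    also have "\<dots> = 2 powr (2 * beta) * real (i + 1) powr (2 * beta)" by (rule powr_mult)
    also have "\<dots> \<le> 2 * real (i + 1) powr (2 * beta)"
      using powr_mono[of "2 * beta" 1 2] beta by (intro mult_right_mono) auto
    finally have "real T powr (2 * beta) \<le> 2 * real (i + 1) powr (2 * beta)" .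
    then have "C^2 / real (i + 1) powr (2 * beta) \<le> 2 * C^2 / real T powr (2 * beta)"
      using TB ib C by (simp add: field_simps)
    then have "C^2 / real (i + 1) powr (2 * beta) < Qf lam (take i h) x" using q1 qx by linarith
    then have "(C / real (i + 1) powr beta)^2 < Qf lam (take i h) x"
      by (simp add: power2_eq_square powr_sq)
    then have "sqrt ((C / real (i + 1) powr beta)^2) < sqrt (Qf lam (take i h) x)"
      using real_sqrt_less_iff by blast
    then have "C / real (i + 1) powr beta < Ucb lam (take i h) x"
      using C by (simp add: Ucb_Qf)
    also have "\<dots> \<le> Max (Ucb lam (take i h) ` A)"
      using x finA by (intro Max_ge) auto
    finally have ex: "explore A lam C beta (take i h)" unfolding explore_def li by simp
    obtain y where y: "y \<in> pol (take i h)" "Ucb lam (take i h) x \<le> Ucb lam (take i h) y"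
      using explore_pick[OF alg k x ex] by auto
    have "Qf lam (take i h) x \<le> Qf lam (take i h) y" using y(2) by (simp add: Ucb_Qf)
    then show "\<exists>y. y \<in> fst (h ! i) \<and> q \<le> Qf lam (take i h) y"
      using y gen iT qx by auto
  qed
  then have "\<exists>y. \<forall>i\<in>?I. y i \<in> fst (h ! i) \<and> q \<le> Qf lam (take i h) (y i)"
    by (rule bchoice)
  then obtain y where y: "\<forall>i\<in>?I. y i \<in> fst (h ! i) \<and> q \<le> Qf lam (take i h) (y i)"
    by blast
  have Isub: "?I \<subseteq> {..<length h}" using len by auto
  have "real (card ?I) \<le> card A * (1 / q + 1)"
    by (rule count_rounds[OF lam finA sub qpos Isub y])
  moreover have "real (card ?I) \<ge> real T / 2"
  proof -
    have d: "2 * (T div 2) \<le> T" by presburger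
    have "card ?I = T - T div 2" by simp
    then have "real (card ?I) = real T - real (T div 2)" using d by (simp add: of_nat_diff)
    moreover have "real (2 * (T div 2)) \<le> real T" using d by (simp only: of_nat_le_iff)
    then have "2 * real (T div 2) \<le> real T" by simp
    ultimately show ?thesis by linarith
  qed
  moreover have "real (card A) * (1 / q + 1) = M / q + M" unfolding M_def by (simp add: field_simps)
  ultimately have "real T / 2 \<le> M / q + M" by linarith
  then have "real T / 4 \<le> M / q" using T unfolding M_def by linarith
  then have "q * real T \<le> 4 * M" using qpos by (simp add: field_simps)
  then have "q \<le> 4 * M / real T" using Tpos by (simp add: field_simps)
  then show False using q2 by linarith
qed



lemma theta_err:
  fixes h :: "'d::finite hist"
  assumes lam: "lam > 0"
  shows "theta_hat lam h - th = matrix_inv (Vmat lam h) *v (Sn th h - lam *\<^sub>R th)"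
proof -
  define W where "W = matrix_inv (Vmat lam h)"
  define b where "b = (\<Sum>i<length h. \<Sum>x\<in>fst (h ! i). of_bool (snd (h ! i) x) *\<^sub>R x)"
  define c where "c = (\<Sum>i<length h. \<Sum>x\<in>fst (h ! i). (x \<bullet> th) *\<^sub>R x)"
  have Vth: "Vmat lam h *v th = lam *\<^sub>R th + c" unfolding c_def by (rule Vmat_mv)
  have Sn: "Sn th h = b - c" unfolding Sn_def b_def c_def
    by (simp add: scaleR_diff_left sum_subtractf)
  have "Sn th h - lam *\<^sub>R th = b - Vmat lam h *v th" using Vth Sn by simp
  then have "W *v (Sn th h - lam *\<^sub>R th) = W *v b - W *v (Vmat lam h *v th)"
    by (simp add: matrix_vector_mult_diff_distrib)
  also have "\<dots> = theta_hat lam h - th"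
    unfolding W_def using Vmat_inv_mv(2)[OF lam] by (simp add: theta_hat_def b_def)
  finally show ?thesis unfolding W_def by simp
qed

lemma rmse_pt:
  fixes h :: "'d::finite hist"
  assumes lam: "lam > 0" and finA: "finite A" and Ane: "A \<noteq> {}"
    and G: "\<forall>x\<in>A. Qf lam h x \<le> G" and th: "norm th \<le> c'"
  shows "sqrt ((1 / real (card A)) * (\<Sum>x\<in>A. (x \<bullet> (theta_hat lam h - th))\<^sup>2))
         \<le> sqrt G * sqrt (2 * Qf lam h (Sn th h) + 2 * lam * c'^2)"
proof -
  define W where "W = matrix_inv (Vmat lam h)"
  define w where "w = Sn th h - lam *\<^sub>R th"
  define R where "R = 2 * Qf lam h (Sn th h) + 2 * lam * c'^2"
  have M: "real (card A) > 0" using finA Ane by (simp add: card_gt_0_iff)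
  have G0: "G \<ge> 0" using G Ane Qf_nonneg[OF lam] by (meson all_not_in_conv order_trans)
  have thth: "th \<bullet> th \<le> c'^2"
  proof -
    have "th \<bullet> th = (norm th)^2" by (simp add: power2_norm_eq_inner)
    also have "\<dots> \<le> c'^2" using th by (intro power_mono) auto
    finally show ?thesis .
  qed
  have Qw: "Qf lam h w \<le> R"
  proof -
    have "Qf lam h w \<le> 2 * Qf lam h (Sn th h) + 2 * Qf lam h (lam *\<^sub>R th)"
      unfolding w_def by (rule Qf_diff2[OF lam])
    also have "\<dots> \<le> 2 * Qf lam h (Sn th h) + 2 * (lam * (th \<bullet> th))"
      using Qf_lam[OF lam, of h th] by simp
    also have "\<dots> \<le> R" unfolding R_def using thth lam by simp
    finally show ?thesis .
  qed
  have trm: "(x \<bullet> (theta_hat lam h - th))\<^sup>2 \<le> G * R" if x: "x \<in> A" for x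
  proof -
    have "(x \<bullet> (theta_hat lam h - th))\<^sup>2 = (x \<bullet> (W *v w))^2"
      unfolding theta_err[OF lam] W_def w_def ..
    also have "\<dots> \<le> Qf lam h x * Qf lam h w" unfolding W_def by (rule Qf_CS[OF lam])
    also have "\<dots> \<le> G * R"
      using G x Qw Qf_nonneg[OF lam] G0 by (intro mult_mono) auto
    finally show ?thesis .
  qed
  have "(1 / real (card A)) * (\<Sum>x\<in>A. (x \<bullet> (theta_hat lam h - th))\<^sup>2) \<le> (1 / real (card A)) * (\<Sum>x\<in>A. G * R)"
    using M trm by (intro mult_left_mono sum_mono) auto
  also have "\<dots> = G * R" using M by simp
  finally have "sqrt ((1 / real (card A)) * (\<Sum>x\<in>A. (x \<bullet> (theta_hat lam h - th))\<^sup>2)) \<le> sqrt (G * R)"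
    by (rule real_sqrt_le_mono)
  then show ?thesis by (simp add: real_sqrt_mult R_def)
qed

lemma exp_sqrt:
  fixes X :: "'a \<Rightarrow> real"
  assumes fin: "finite (set_pmf p)" and X0: "\<And>x. x \<in> set_pmf p \<Longrightarrow> X x \<ge> 0"
    and EX: "measure_pmf.expectation p X \<le> B" and B: "B > 0"
  shows "measure_pmf.expectation p (\<lambda>x. sqrt (X x)) \<le> sqrt B"
proof -
  have sB: "sqrt B > 0" using B by simp
  have pt: "sqrt (X x) \<le> (X x + B) / (2 * sqrt B)" if "x \<in> set_pmf p" for x
  proof -
    have "0 \<le> (sqrt (X x) - sqrt B)^2" by simp
    also have "\<dots> = X x + B - 2 * sqrt (X x) * sqrt B"
      using X0[OF that] B by (simp add: power2_eq_square algebra_simps)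
    finally show ?thesis using sB by (simp add: field_simps)
  qed
  have int: "integrable p F" for F :: "'a \<Rightarrow> real" by (rule integrable_measure_pmf_finite[OF fin])
  have "measure_pmf.expectation p (\<lambda>x. sqrt (X x)) \<le> measure_pmf.expectation p (\<lambda>x. (X x + B) / (2 * sqrt B))"
    by (intro integral_mono_AE int AE_pmfI pt)
  also have "\<dots> = (measure_pmf.expectation p X + B) / (2 * sqrt B)"
    by (simp add: int)
  also have "\<dots> \<le> (B + B) / (2 * sqrt B)" using EX sB by (intro divide_right_mono) auto
  also have "\<dots> = sqrt B" using B by (simp add: field_simps)
  finally show ?thesis .
qed

lemma gap_bounds:
  assumes finA: "finite A" and S: "S \<subseteq> A" "card S = k" and mean: "\<forall>x\<in>A. 0 \<le> x \<bullet> th \<and> x \<bullet> th \<le> 1"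
  shows "0 \<le> gap A k th S \<and> gap A k th S \<le> k"
proof -
  define V where "V = {(\<Sum>x\<in>S. x \<bullet> th) | S. S \<subseteq> A \<and> card S = k}"
  have V: "V = (\<lambda>S. \<Sum>x\<in>S. x \<bullet> th) ` {S. S \<subseteq> A \<and> card S = k}" unfolding V_def by auto
  have finV: "finite V" unfolding V using finA by (intro finite_imageI) (auto intro: finite_subset[of _ "Pow A"])
  have inV: "(\<Sum>x\<in>S. x \<bullet> th) \<in> V" using S unfolding V_def by auto
  have ub: "v \<le> k" if "v \<in> V" for v
  proof -
    from that obtain S' where S'0: "S' \<in> {S. S \<subseteq> A \<and> card S = k}" and v: "v = (\<Sum>x\<in>S'. x \<bullet> th)"
      unfolding V by (rule imageE)
    then have S': "S' \<subseteq> A" "card S' = k" "v = (\<Sum>x\<in>S'. x \<bullet> th)" by auto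
    have "(\<Sum>x\<in>S'. x \<bullet> th) \<le> (\<Sum>x\<in>S'. 1)" using S' mean by (intro sum_mono) auto
    then show ?thesis using S' by simp
  qed
  have o1: "(\<Sum>x\<in>S. x \<bullet> th) \<le> opt_val A k th" unfolding opt_val_def V_def[symmetric]
    using finV inV by (rule Max_ge)
  have o2: "opt_val A k th \<le> k" unfolding opt_val_def V_def[symmetric]
    using finV inV ub by (subst Max_le_iff) auto
  have s0: "0 \<le> (\<Sum>x\<in>S. x \<bullet> th)" using S mean by (intro sum_nonneg) auto
  show ?thesis unfolding gap_def using o1 o2 s0 by simp
qed



lemma harm_le_ln: "T \<ge> 1 \<Longrightarrow> harm T \<le> ln (real T) + (1::real)"
proof -
  assume T: "T \<ge> 1"
  then obtain n where n: "T = Suc n" by (cases T) auto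
  have "harm (Suc n) - ln (real (Suc n)) \<le> harm (Suc 0) - ln (real (Suc 0))"
    using decseq_harm_diff_ln unfolding decseq_def by (metis le0 of_nat_Suc)
  moreover have "harm (0::nat) = (0::real)" by (simp add: harm_def)
  ultimately show ?thesis using n by (simp add: harm_Suc)
qed

lemma main_bounds:
  fixes A :: "(real^'d) set" and th :: "real^'d"
    and k :: nat and lam c c' C beta :: real
    and f pol :: "'d hist \<Rightarrow> (real^'d) set"
  assumes finA: "finite A"
    and normth: "norm th \<le> c'"
    and mean01: "\<forall>x\<in>A. 0 \<le> x \<bullet> th \<and> x \<bullet> th \<le> 1"
    and k: "1 \<le> k" "k \<le> card A"
    and lam: "lam > 0"
    and C: "C > 0"
    and beta: "1/4 \<le> beta" "beta \<le> 1/2"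
    and f_valid: "\<forall>h. f h \<subseteq> A \<and> card (f h) = k"
    and alg: "influenceCB A k lam C beta f pol"
  shows "\<forall>T. regret A k th pol T - exploit_regret A k lam C beta th pol T \<le>
              k * card A * (real T powr (2 * beta) / C^2 + 1) \<and>
            0 \<le> regret A k th pol T - exploit_regret A k lam C beta th pol T"
    and "\<forall>T. real T \<ge> 4 * card A \<longrightarrow>
           0 \<le> rmse A lam th pol T \<and>
           rmse A lam th pol T \<le> sqrt ((2 * C^2 + 4 * card A) / real T powr (2 * beta)) *
                sqrt (2 * k * card A * harm T + 2 * lam * c'^2)"
proof -
  define M where "M = card A"
  have M1: "card A \<ge> 1" using k by linarith
  have Ane: "A \<noteq> {}" using M1 by auto
  have valid: "pol h \<subseteq> A \<and> card (pol h) = k" for h by (rule pol_valid[OF alg f_valid])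
  have finpol: "\<forall>h. finite (pol h)" using valid finA finite_subset by metis
  have polA: "\<forall>h. pol h \<subseteq> A" using valid by blast
  have supp: "length h = T \<and> (\<forall>i<T. fst (h ! i) = pol (take i h))"
    if "h \<in> set_pmf (hist_pmf th pol T)" for h T using hist_support[OF that] .
  have finH: "finite (set_pmf (hist_pmf th pol T))" for T by (rule hist_finite[OF finpol])
  have int: "integrable (measure_pmf (hist_pmf th pol T)) F" for T and F :: "'d hist \<Rightarrow> real"
    by (rule integrable_measure_pmf_finite[OF finH])
  have beta0: "0 \<le> beta" using beta by simp
  show "\<forall>T. regret A k th pol T - exploit_regret A k lam C beta th pol T \<le>
              k * card A * (real T powr (2 * beta) / C^2 + 1) \<and>
            0 \<le> regret A k th pol T - exploit_regret A k lam C beta th pol T"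
  proof
    fix T
    define ER where "ER h = (\<Sum>i<length h. if explore A lam C beta (take i h) then gap A k th (fst (h ! i)) else 0)" for h
    have diff: "regret A k th pol T - exploit_regret A k lam C beta th pol T =
                measure_pmf.expectation (hist_pmf th pol T) ER"
    proof -
      have "regret A k th pol T = measure_pmf.expectation (hist_pmf th pol T)
              (\<lambda>h. ER h + (\<Sum>i<length h. if explore A lam C beta (take i h) then 0 else gap A k th (fst (h ! i))))"
        unfolding regret_def ER_def
        by (intro Bochner_Integration.integral_cong refl, simp only: sum.distrib[symmetric],
            intro sum.cong refl) simp
      also have "\<dots> = measure_pmf.expectation (hist_pmf th pol T) ER + exploit_regret A k lam C beta th pol T"
        unfolding exploit_regret_def by (rule Bochner_Integration.integral_add[OF int int])
      finally show ?thesis by simp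
    qed
    have pt: "0 \<le> ER h \<and> ER h \<le> k * card A * (real T powr (2 * beta) / C^2 + 1)"
      if h: "h \<in> set_pmf (hist_pmf th pol T)" for h
    proof -
      from supp[OF h] have len: "length h = T" and gen: "\<forall>i<T. fst (h ! i) = pol (take i h)" by auto
      have gb: "0 \<le> gap A k th (fst (h ! i)) \<and> gap A k th (fst (h ! i)) \<le> k" if "i < T" for i
        using gap_bounds[OF finA _ _ mean01] valid gen that by metis
      have "ER h \<le> (\<Sum>i<T. if explore A lam C beta (take i h) then real k else 0)"
        unfolding ER_def len using gb by (intro sum_mono) auto
      also have "\<dots> = (\<Sum>i\<in>{i\<in>{..<T}. explore A lam C beta (take i h)}. real k)"
        by (rule sum.inter_filter[symmetric]) simp
      also have "\<dots> = real k * real (card {i. i < T \<and> explore A lam C beta (take i h)})"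
        by simp
      also have "\<dots> \<le> real k * (card A * (real T powr (2 * beta) / C^2 + 1))"
        by (intro mult_left_mono explore_count[OF lam C beta0 finA Ane k(1) alg polA len gen]) auto
      finally have u: "ER h \<le> k * card A * (real T powr (2 * beta) / C^2 + 1)" by simp
      have "0 \<le> ER h" unfolding ER_def len using gb by (intro sum_nonneg) auto
      with u show ?thesis by simp
    qed
    show "regret A k th pol T - exploit_regret A k lam C beta th pol T \<le>
              k * card A * (real T powr (2 * beta) / C^2 + 1) \<and>
            0 \<le> regret A k th pol T - exploit_regret A k lam C beta th pol T"
      unfolding diff using pt
      by (intro conjI measure_pmf.integral_le_const integral_nonneg_AE int AE_pmfI) auto
  qed
  show "\<forall>T. real T \<ge> 4 * card A \<longrightarrow>
           0 \<le> rmse A lam th pol T \<and>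
           rmse A lam th pol T \<le> sqrt ((2 * C^2 + 4 * card A) / real T powr (2 * beta)) *
                sqrt (2 * k * card A * harm T + 2 * lam * c'^2)"
  proof (intro allI impI)
    fix T :: nat assume T4: "real T \<ge> 4 * card A"
    have T1: "T \<ge> 1" using T4 M1 by linarith
    define G where "G = (2 * C^2 + 4 * card A) / real T powr (2 * beta)"
    define Phi where "Phi h = Qf lam h (Sn th h)" for h
    define B where "B = 2 * k * card A * harm T + 2 * lam * c'^2"
    have c'0: "c' \<ge> 0" using normth norm_ge_zero order_trans by blast
    have Bpos: "B > 0"
    proof -
      have "harm T > (0::real)" using T1 by simp
      moreover have "0 < real (2 * k * card A)" using k M1 by simp
      ultimately have "0 < real (2 * k * card A) * harm T" by simp
      moreover have "0 \<le> 2 * lam * c'^2" using lam by simp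
      ultimately show ?thesis unfolding B_def by linarith
    qed
    have EPhi: "measure_pmf.expectation (hist_pmf th pol T) Phi \<le> k * card A * harm T"
    proof -
      have eq: "Phi h = Psi lam th k h + k * Pot lam h" for h unfolding Phi_def Psi_def by simp
      have "measure_pmf.expectation (hist_pmf th pol T) Phi =
            measure_pmf.expectation (hist_pmf th pol T) (Psi lam th k) +
            k * measure_pmf.expectation (hist_pmf th pol T) (Pot lam)"
        unfolding eq by (simp add: int)
      also have "\<dots> \<le> 0 + k * (card A * harm T)"
      proof (intro add_mono mult_left_mono)
        show "measure_pmf.expectation (hist_pmf th pol T) (Psi lam th k) \<le> 0"
          by (rule Psi_exp[OF lam]) (use valid finpol mean01 in blast)
        show "measure_pmf.expectation (hist_pmf th pol T) (Pot lam) \<le> card A * harm T"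
        proof (intro measure_pmf.integral_le_const int AE_pmfI)
          fix h assume h: "h \<in> set_pmf (hist_pmf th pol T)"
          from supp[OF h] have len: "length h = T" and gen: "\<forall>i<T. fst (h ! i) = pol (take i h)" by auto
          have sub: "\<forall>l<length h. fst (h ! l) \<subseteq> A" using gen polA len by auto
          show "Pot lam h \<le> card A * harm T" unfolding Pot_def using pot_bound[OF lam finA sub] len by simp
        qed
      qed simp
      finally show ?thesis by simp
    qed
    have pt: "sqrt ((1 / real (card A)) * (\<Sum>x\<in>A. (x \<bullet> (theta_hat lam h - th))\<^sup>2))
         \<le> sqrt G * sqrt (2 * Phi h + 2 * lam * c'^2)"
      if h: "h \<in> set_pmf (hist_pmf th pol T)" for h
    proof -
      from supp[OF h] have len: "length h = T" and gen: "\<forall>i<T. fst (h ! i) = pol (take i h)" by auto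
      have "\<forall>x\<in>A. Qf lam h x \<le> G"
        unfolding G_def using u_bound[OF lam C beta0 beta(2) finA k(1) alg polA len gen T4 T1] by blast
      then show ?thesis unfolding Phi_def by (rule rmse_pt[OF lam finA Ane _ normth])
    qed
    have "rmse A lam th pol T \<le> measure_pmf.expectation (hist_pmf th pol T)
             (\<lambda>h. sqrt G * sqrt (2 * Phi h + 2 * lam * c'^2))"
      unfolding rmse_def by (intro integral_mono_AE int AE_pmfI pt)
    also have "\<dots> = sqrt G * measure_pmf.expectation (hist_pmf th pol T) (\<lambda>h. sqrt (2 * Phi h + 2 * lam * c'^2))"
      by simp
    also have "\<dots> \<le> sqrt G * sqrt B"
    proof (intro mult_left_mono exp_sqrt[OF finH])
      fix h assume "h \<in> set_pmf (hist_pmf th pol T)"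
      have "0 \<le> Qf lam h (Sn th h)" by (rule Qf_nonneg[OF lam])
      moreover have "0 \<le> lam * c'^2" using lam by simp
      ultimately show "0 \<le> 2 * Phi h + 2 * lam * c'^2" unfolding Phi_def by simp
    next
      have "measure_pmf.expectation (hist_pmf th pol T) (\<lambda>h. 2 * Phi h + 2 * lam * c'^2) =
            2 * measure_pmf.expectation (hist_pmf th pol T) Phi + 2 * lam * c'^2"
        by (simp add: int)
      also have "\<dots> \<le> B" unfolding B_def using EPhi by simp
      finally show "measure_pmf.expectation (hist_pmf th pol T) (\<lambda>h. 2 * Phi h + 2 * lam * c'^2) \<le> B" .
    qed (use Bpos in \<open>auto simp: G_def intro!: divide_nonneg_nonneg add_nonneg_nonneg\<close>)
    finally have up: "rmse A lam th pol T \<le> sqrt G * sqrt B" .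
    have "0 \<le> rmse A lam th pol T" unfolding rmse_def
      by (intro integral_nonneg_AE AE_pmfI) (auto intro!: divide_nonneg_nonneg sum_nonneg)
    then show "0 \<le> rmse A lam th pol T \<and> rmse A lam th pol T \<le>
        sqrt ((2 * C^2 + 4 * card A) / real T powr (2 * beta)) * sqrt (2 * k * card A * harm T + 2 * lam * c'^2)"
      using up unfolding G_def B_def by simp
  qed
qed



lemma ln_ge1: "real T \<ge> 3 \<Longrightarrow> 1 \<le> ln (real T)"
proof -
  assume T: "real T \<ge> 3"
  have "exp 1 \<le> real T" using exp_le T by linarith
  then show ?thesis using T by (subst ln_ge_iff) auto
qed

theorem theorem2:
  fixes A :: "(real^'d) set" and th :: "real^'d"
    and k :: nat and lam c c' C beta :: real
    and f pol :: "'d hist \<Rightarrow> (real^'d) set"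
  assumes finA: "finite A"
    and spanA: "span A = UNIV"
    and normA: "\<forall>x\<in>A. norm x \<le> c"
    and normth: "norm th \<le> c'"
    and mean01: "\<forall>x\<in>A. 0 \<le> x \<bullet> th \<and> x \<bullet> th \<le> 1"
    and k: "1 \<le> k" "k \<le> card A"
    and lam: "lam > 0"
    and C: "C > 0"
    and beta: "1/4 \<le> beta" "beta \<le> 1/2"
    and f_valid: "\<forall>h. f h \<subseteq> A \<and> card (f h) = k"
    and f_regret: "exploit_regret A k lam C beta th pol \<in> softO (\<lambda>T. sqrt (real T))"
    and alg: "influenceCB A k lam C beta f pol"
  shows "regret A k th pol \<in> softO (\<lambda>T. real T powr (2 * beta)) \<and>
         rmse A lam th pol \<in> softO (\<lambda>T. real T powr (- beta))"
proof
  note MB = main_bounds[OF finA normth mean01 k lam C beta f_valid alg]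
  define M where "M = real (card A)"
  have M1: "M \<ge> 1" using k unfolding M_def by linarith
  have ev3: "eventually (\<lambda>T::nat. real T \<ge> 4 * M + 3) at_top"
  proof -
    have "eventually (\<lambda>T::nat. T \<ge> nat \<lceil>4 * M + 3\<rceil>) at_top" by (rule eventually_ge_at_top)
    then show ?thesis by eventually_elim linarith
  qed
  show "regret A k th pol \<in> softO (\<lambda>T. real T powr (2 * beta))"
  proof -
    from f_regret obtain p where ex: "exploit_regret A k lam C beta th pol \<in> O(\<lambda>T. sqrt (real T) * ln (real T) ^ p)"
      unfolding softO_def by blast
    let ?g = "\<lambda>T::nat. real T powr (2 * beta) * ln (real T) ^ p"
    have e1: "(\<lambda>T. sqrt (real T) * ln (real T) ^ p) \<in> O(?g)"
    proof (rule bigoI[where c=1])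
      show "eventually (\<lambda>T. norm (sqrt (real T) * ln (real T) ^ p) \<le> 1 * norm (?g T)) at_top"
        using ev3
      proof eventually_elim
        case (elim T)
        then have T1: "real T \<ge> 1" using M1 by linarith
        have l0: "0 \<le> ln (real T) ^ p" using T1 by simp
        have "sqrt (real T) = real T powr (1/2)" using powr_half_sqrt[of "real T"] by simp
        also have "\<dots> \<le> real T powr (2 * beta)" using beta T1 by (intro powr_mono) auto
        finally have "sqrt (real T) * ln (real T) ^ p \<le> ?g T" using l0 by (intro mult_right_mono) auto
        then show ?case using l0 by (simp add: abs_mult)
      qed
    qed
    define K where "K = real k * M * (1 / C^2 + 1)"
    have e2: "(\<lambda>T. regret A k th pol T - exploit_regret A k lam C beta th pol T) \<in> O(?g)"
    proof (rule bigoI[where c=K])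
      show "eventually (\<lambda>T. norm (regret A k th pol T - exploit_regret A k lam C beta th pol T) \<le> K * norm (?g T)) at_top"
        using ev3
      proof eventually_elim
        case (elim T)
        then have T1: "real T \<ge> 1" and T3: "real T \<ge> 3" using M1 by linarith+
        have l1: "1 \<le> ln (real T) ^ p" using ln_ge1[OF T3] by (rule one_le_power)
        have P1: "1 \<le> real T powr (2 * beta)" using T1 beta by (intro ge_one_powr_ge_zero) auto
        have K0: "K \<ge> 0" unfolding K_def using M1 by simp
        have b: "0 \<le> regret A k th pol T - exploit_regret A k lam C beta th pol T"
          "regret A k th pol T - exploit_regret A k lam C beta th pol T \<le> k * card A * (real T powr (2 * beta) / C^2 + 1)"
          using MB(1) by auto
        have "k * card A * (real T powr (2 * beta) / C^2 + 1) \<le> k * M * (real T powr (2 * beta) / C^2 + real T powr (2 * beta))"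
          using P1 M1 unfolding M_def of_nat_mult by (intro mult_left_mono add_left_mono) auto
        also have "\<dots> = K * real T powr (2 * beta)" unfolding K_def by (simp add: field_simps)
        also have "\<dots> \<le> K * (real T powr (2 * beta) * ln (real T) ^ p)"
          using K0 P1 l1 by (intro mult_left_mono) (auto intro: mult_le_cancel_left1[THEN iffD2])
        finally show ?case using b l1 P1 by (simp add: abs_mult)
      qed
    qed
    have "(\<lambda>T. (regret A k th pol T - exploit_regret A k lam C beta th pol T) + exploit_regret A k lam C beta th pol T) \<in> O(?g)"
      by (rule sum_in_bigo(1)[OF e2 landau_o.big_trans[OF ex e1]])
    then have "regret A k th pol \<in> O(?g)" by simp
    then show ?thesis unfolding softO_def by blast
  qed
  show "rmse A lam th pol \<in> softO (\<lambda>T. real T powr (- beta))"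
  proof -
    let ?g = "\<lambda>T::nat. real T powr (- beta) * ln (real T) ^ 1"
    define K3 where "K3 = 4 * real k * M + 2 * lam * c'^2"
    define K where "K = sqrt (2 * C^2 + 4 * M) * sqrt K3"
    have "rmse A lam th pol \<in> O(?g)"
    proof (rule bigoI[where c=K])
      show "eventually (\<lambda>T. norm (rmse A lam th pol T) \<le> K * norm (?g T)) at_top"
        using ev3
      proof eventually_elim
        case (elim T)
        then have T1: "T \<ge> 1" and T3: "real T \<ge> 3" and T4: "real T \<ge> 4 * card A"
          using M1 unfolding M_def by linarith+
        have l1: "1 \<le> ln (real T)" by (rule ln_ge1[OF T3])
        have Tp: "real T powr beta > 0" using T1 by simp
        have b: "0 \<le> rmse A lam th pol T"
          "rmse A lam th pol T \<le> sqrt ((2 * C^2 + 4 * card A) / real T powr (2 * beta)) *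
                sqrt (2 * k * card A * harm T + 2 * lam * c'^2)"
          using MB(2) T4 by auto
        have s1: "sqrt ((2 * C^2 + 4 * card A) / real T powr (2 * beta)) = sqrt (2 * C^2 + 4 * M) * real T powr (- beta)"
        proof -
          have "sqrt (real T powr (2 * beta)) = real T powr beta"
            unfolding powr_sq using Tp by (simp add: real_sqrt_mult)
          then show ?thesis unfolding M_def real_sqrt_divide powr_minus by (simp add: divide_inverse)
        qed
        have s2: "sqrt (2 * k * card A * harm T + 2 * lam * c'^2) \<le> sqrt K3 * ln (real T)"
        proof -
          have hT: "harm T \<le> ln (real T) + 1" by (rule harm_le_ln[OF T1])
          have c0: "0 \<le> lam * c'^2" using lam by simp
          have "real (2 * k * card A) * harm T \<le> real (2 * k * card A) * (ln (real T) + 1)"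
            using hT by (intro mult_left_mono) auto
          also have "\<dots> \<le> real (2 * k * card A) * (2 * ln (real T))"
            using l1 by (intro mult_left_mono) auto
          finally have f1: "real (2 * k * card A) * harm T \<le> real (2 * k * card A) * (2 * ln (real T))" .
          have f2: "lam * c'^2 * 1 \<le> lam * c'^2 * ln (real T)" by (rule mult_left_mono[OF l1 c0])
          have f3: "real (2 * k * card A) = 2 * real k * M" unfolding M_def by simp
          have "2 * k * card A * harm T + 2 * lam * c'^2 \<le> 4 * k * M * ln (real T) + 2 * lam * c'^2 * ln (real T)"
            using f1 f2 unfolding f3 by (simp add: algebra_simps)
          also have "\<dots> = K3 * ln (real T)" unfolding K3_def by (simp add: algebra_simps)
          also have "\<dots> \<le> K3 * (ln (real T))^2"
          proof -
            have K30: "K3 \<ge> 0" unfolding K3_def using c0 M1 by simp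
            have "ln (real T) * 1 \<le> ln (real T) * ln (real T)" using l1 by (intro mult_left_mono) auto
            then show ?thesis using K30 by (intro mult_left_mono) (auto simp: power2_eq_square)
          qed
          finally have "sqrt (2 * k * card A * harm T + 2 * lam * c'^2) \<le> sqrt (K3 * (ln (real T))^2)"
            by (rule real_sqrt_le_mono)
          also have "\<dots> = sqrt K3 * ln (real T)" using l1 by (simp add: real_sqrt_mult)
          finally show ?thesis .
        qed
        have "rmse A lam th pol T \<le> sqrt (2 * C^2 + 4 * M) * real T powr (- beta) * (sqrt K3 * ln (real T))"
        proof -
          have "0 \<le> sqrt (2 * C^2 + 4 * M) * real T powr (- beta)" using M1 by simp
          then have "sqrt (2 * C^2 + 4 * M) * real T powr (- beta) * sqrt (2 * k * card A * harm T + 2 * lam * c'^2)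
              \<le> sqrt (2 * C^2 + 4 * M) * real T powr (- beta) * (sqrt K3 * ln (real T))"
            by (rule mult_left_mono[OF s2])
          then show ?thesis using b(2) unfolding s1 by linarith
        qed
        also have "\<dots> = K * ?g T" unfolding K_def by (simp add: algebra_simps)
        finally show ?case using b(1) l1 by (simp add: abs_mult)
      qed
    qed
    then show ?thesis unfolding softO_def by blast
  qed
qed


end
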